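(* Let $U$ be a nonnegative, progressively measurable, right-continuous process and fix $t\ge0$. Let $A_t=\{\mathbb E[\int_t^\infty U_s^\theta ds\mid\mathcal F_t]>0\}$ and $$B_t=\bigcup_{T\in\mathbb Q,\,T\ge t}\ \bigcup_{\epsilon\in\mathbb Q,\,\epsilon>0}\big\{\mathbb E[\mathbf 1_{\{U_T\ge\epsilon\}}\mid\mathcal F_t]>0\big\}.$$ Then $\mathbb P(A_t\setminus B_t)=0$.
   Context: Work on a filtered probability space $(\Omega,\mathcal F,(\mathcal F_t)_{t\ge0},\mathbb P)$ with complete continuous filtration and trivial $\mathcal F_0$; $\theta>1$ is a fixed constant. *)

theory Defs
  imports "HOL-Probability.Probability"
begin

text \<open>A filtration indexed by the time set [0,\<infinity>) (values of F at negative times are irrelevant),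
  consisting of sub-sigma-algebras of M, increasing, complete, right- and left-continuous,
  with F 0 trivial (every event of F 0 has probability 0 or 1).\<close>

definition filtration_on :: "'a measure \<Rightarrow> (real \<Rightarrow> 'a measure) \<Rightarrow> bool" where
  "filtration_on M F \<longleftrightarrow>
     (\<forall>t\<ge>0. subalgebra M (F t)) \<and>
     (\<forall>s t. 0 \<le> s \<longrightarrow> s \<le> t \<longrightarrow> sets (F s) \<subseteq> sets (F t))"

definition complete_filtration :: "'a measure \<Rightarrow> (real \<Rightarrow> 'a measure) \<Rightarrow> bool" where
  "complete_filtration M F \<longleftrightarrow>
     (\<forall>N. N \<subseteq> space M \<and> (\<exists>N'\<in>null_sets M. N \<subseteq> N') \<longrightarrow> N \<in> sets (F 0))"

definition continuous_filtration :: "'a measure \<Rightarrow> (real \<Rightarrow> 'a measure) \<Rightarrow> bool" where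
  "continuous_filtration M F \<longleftrightarrow>
     (\<forall>t\<ge>0. sets (F t) = (\<Inter>s\<in>{t<..}. sets (F s))) \<and>
     (\<forall>t>0. sets (F t) = sigma_sets (space M) (\<Union>s\<in>{0..<t}. sets (F s)))"

definition trivial_initial :: "'a measure \<Rightarrow> (real \<Rightarrow> 'a measure) \<Rightarrow> bool" where
  "trivial_initial M F \<longleftrightarrow> (\<forall>A\<in>sets (F 0). measure M A = 0 \<or> measure M A = 1)"

definition progressively_measurable ::
  "(real \<Rightarrow> 'a measure) \<Rightarrow> (real \<Rightarrow> 'a \<Rightarrow> real) \<Rightarrow> bool" where
  "progressively_measurable F U \<longleftrightarrow>
     (\<forall>t\<ge>0. (\<lambda>(s, \<omega>). U s \<omega>) \<in> borel_measurable (restrict_space borel {0..t} \<Otimes>\<^sub>M F t))"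

end

theory Submission
  imports Defs
begin

lemma rc_zero:
  fixes f :: "real \<Rightarrow> real" and t :: real
  assumes t0: "t \<ge> 0"
    and nn: "\<And>s. s \<ge> 0 \<Longrightarrow> f s \<ge> 0"
    and rc: "\<And>s. s \<ge> 0 \<Longrightarrow> continuous (at_right s) f"
    and small: "\<And>T \<epsilon>. T \<in> \<rat> \<Longrightarrow> t \<le> T \<Longrightarrow> \<epsilon> \<in> \<rat> \<Longrightarrow> 0 < \<epsilon> \<Longrightarrow> f T < \<epsilon>"
    and s: "t \<le> s"
  shows "f s = 0"
proof -
  have zq: "f T = 0" if "T \<in> \<rat>" "t \<le> T" for T
  proof (rule ccontr)
    assume "f T \<noteq> 0"
    with nn[of T] that t0 have "0 < f T" by auto
    then obtain e where "e \<in> \<rat>" "0 < e" "e < f T" using Rats_dense_in_real by blast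
    with small[OF that \<open>e \<in> \<rat>\<close> \<open>0 < e\<close>] show False by auto
  qed
  show ?thesis
  proof (rule ccontr)
    assume "f s \<noteq> 0"
    with nn[of s] s t0 have pos: "0 < f s" by auto
    have "(f \<longlongrightarrow> f s) (at_right s)" using rc[of s] s t0 by (simp add: continuous_within)
    then have "eventually (\<lambda>r. f s / 2 < f r) (at_right s)"
      using pos by (intro order_tendstoD(1)) auto
    then obtain b where b: "b > s" "\<And>y. y > s \<Longrightarrow> y < b \<Longrightarrow> f s / 2 < f y"
      unfolding eventually_at_right_field by blast
    then obtain q where q: "q \<in> \<rat>" "s < q" "q < b" using Rats_dense_in_real by blast
    have "f q = 0" using zq[OF q(1)] q s by auto
    with b(2)[OF q(2,3)] pos show False by auto
  qed
qed

theorem lemma8p3: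
  fixes M :: "'a measure" and F :: "real \<Rightarrow> 'a measure"
    and U :: "real \<Rightarrow> 'a \<Rightarrow> real" and \<theta> t :: real
  assumes "prob_space M"
    and "filtration_on M F" and "complete_filtration M F"
    and "continuous_filtration M F" and "trivial_initial M F"
    and "\<theta> > 1"
    and "\<And>s \<omega>. s \<ge> 0 \<Longrightarrow> \<omega> \<in> space M \<Longrightarrow> U s \<omega> \<ge> 0"
    and "progressively_measurable F U"
    and "\<And>s \<omega>. s \<ge> 0 \<Longrightarrow> \<omega> \<in> space M \<Longrightarrow> continuous (at_right s) (\<lambda>r. U r \<omega>)"
    and "t \<ge> 0"
  shows "emeasure M
     ({\<omega> \<in> space M. 0 < nn_cond_exp M (F t)
          (\<lambda>x. \<integral>\<^sup>+ s \<in> {t..}. ennreal (U s x powr \<theta>) \<partial>lborel) \<omega>}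
      - (\<Union>T\<in>{T \<in> \<rat>. t \<le> T}. \<Union>\<epsilon>\<in>{\<epsilon> \<in> \<rat>. 0 < \<epsilon>}.
           {\<omega> \<in> space M. 0 < nn_cond_exp M (F t)
               (indicator {x \<in> space M. \<epsilon> \<le> U T x}) \<omega>})) = 0"
proof -
  interpret P: prob_space M by fact
  have subalg: "subalgebra M (F t)" using assms(2,10) unfolding filtration_on_def by auto
  interpret S: finite_measure_subalgebra M "F t"
    by unfold_locales (rule subalg)
  have spF: "space (F t) = space M" and setsF: "sets (F t) \<subseteq> sets M"
    using subalg unfolding subalgebra_def by auto
  define g where "g = (\<lambda>x. \<integral>\<^sup>+ s \<in> {t..}. ennreal (U s x powr \<theta>) \<partial>lborel)"
  define c where "c = (\<lambda>T \<epsilon>. nn_cond_exp M (F t) (indicator {x \<in> space M. \<epsilon> \<le> U T x}))"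
  define B where "B = (\<Union>T\<in>{T \<in> \<rat>. t \<le> T}. \<Union>\<epsilon>\<in>{\<epsilon> \<in> \<rat>. 0 < \<epsilon>}.
           {\<omega> \<in> space M. 0 < c T \<epsilon> \<omega>})"
  define D where "D = space M - B"
  have cQ: "countable {T \<in> \<rat>. P T}" for P :: "real \<Rightarrow> bool"
    by (rule countable_subset[OF _ countable_rat]) auto
  have Bsets: "B \<in> sets (F t)"
    unfolding B_def
  proof (rule sets.countable_UN'[OF cQ], safe)
    fix T assume "T \<in> \<rat>" "t \<le> T"
    show "(\<Union>\<epsilon>\<in>{\<epsilon> \<in> \<rat>. 0 < \<epsilon>}. {\<omega> \<in> space M. 0 < c T \<epsilon> \<omega>}) \<in> sets (F t)"
    proof (rule sets.countable_UN'[OF cQ], safe)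
      fix \<epsilon>
      have "{\<omega> \<in> space (F t). 0 < c T \<epsilon> \<omega>} \<in> sets (F t)"
        unfolding c_def by measurable
      then show "{\<omega> \<in> space M. 0 < c T \<epsilon> \<omega>} \<in> sets (F t)" using spF by simp
    qed
  qed
  have Dsets: "D \<in> sets (F t)"
    unfolding D_def using Bsets spF by (metis sets.compl_sets)
  have DM: "D \<in> sets M" using Dsets setsF by auto
  have Umeas: "U T \<in> borel_measurable M" if "T \<ge> 0" for T
  proof -
    have pm: "(\<lambda>(s, \<omega>). U s \<omega>) \<in> borel_measurable (restrict_space borel {0..T} \<Otimes>\<^sub>M F T)"
      using assms(8) that unfolding progressively_measurable_def by auto
    have "(\<lambda>\<omega>. (T, \<omega>)) \<in> F T \<rightarrow>\<^sub>M (restrict_space borel {0..T} \<Otimes>\<^sub>M F T)"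
      using that by (intro measurable_Pair measurable_const measurable_ident_sets) (auto simp: space_restrict_space)
    from measurable_comp[OF this pm] have "U T \<in> borel_measurable (F T)" by (simp add: o_def)
    moreover have "subalgebra M (F T)" using assms(2) that unfolding filtration_on_def by auto
    ultimately show ?thesis using measurable_from_subalg by blast
  qed
  define X where "X = {T \<in> \<rat>. t \<le> T} \<times> {\<epsilon> \<in> \<rat>. 0 < (\<epsilon>::real)}"
  have cX: "countable X" unfolding X_def by (intro countable_SIGMA cQ)
  have step1: "AE x in M. x \<in> D \<longrightarrow> U T x < \<epsilon>" if "(T, \<epsilon>) \<in> X" for T \<epsilon>
  proof -
    from that have T: "T \<in> \<rat>" "t \<le> T" and e: "\<epsilon> \<in> \<rat>" "0 < \<epsilon>" unfolding X_def by auto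
    define S where "S = {x \<in> space M. \<epsilon> \<le> U T x}"
    have [measurable]: "U T \<in> borel_measurable M" using Umeas T assms(10) by auto
    have SM: "S \<in> sets M" unfolding S_def by measurable
    have "emeasure M (D \<inter> S) = (\<integral>\<^sup>+ x. indicator D x * indicator S x \<partial>M)"
      using DM SM by (simp add: indicator_inter_arith[symmetric])
    also have "\<dots> = (\<integral>\<^sup>+ x. indicator D x * c T \<epsilon> x \<partial>M)"
      unfolding c_def S_def
      by (rule S.nn_cond_exp_intg[symmetric]) (use Dsets SM S_def in auto)
    also have "\<dots> = (\<integral>\<^sup>+ x. 0 \<partial>M)"
    proof (rule nn_integral_cong)
      fix x assume "x \<in> space M"
      show "indicator D x * c T \<epsilon> x = 0"
      proof (cases "x \<in> D")
        case True
        then have "\<not> 0 < c T \<epsilon> x" using T e unfolding D_def B_def by auto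
        then show ?thesis by (simp add: True)
      qed simp
    qed
    finally have "D \<inter> S \<in> null_sets M" using DM SM by auto
    then show ?thesis
      by (rule AE_I') (auto simp: S_def not_less)
  qed
  have "AE x in M. \<forall>p\<in>X. x \<in> D \<longrightarrow> U (fst p) x < snd p"
    using step1 by (subst AE_ball_countable[OF cX]) auto
  then have step2: "AE x in M. x \<in> D \<longrightarrow> g x = 0"
  proof (rule AE_mp, intro AE_I2 impI)
    fix x assume x: "x \<in> space M" and H: "\<forall>p\<in>X. x \<in> D \<longrightarrow> U (fst p) x < snd p" and xD: "x \<in> D"
    have z: "U s x = 0" if "t \<le> s" for s
      by (rule rc_zero[of t "\<lambda>r. U r x"]) (use assms(7,9,10) x H xD that in \<open>auto simp: X_def\<close>)
    show "g x = 0" unfolding g_def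
      by (rule nn_integral_zero') (auto intro!: AE_I2 simp: z indicator_def)
  qed
  show ?thesis
  proof (cases "g \<in> borel_measurable M")
    case False
    then show ?thesis unfolding g_def[symmetric] by (simp add: nn_cond_exp_def)
  next
    case True
    have "(\<integral>\<^sup>+ x. indicator D x * nn_cond_exp M (F t) g x \<partial>M) = (\<integral>\<^sup>+ x. indicator D x * g x \<partial>M)"
      by (rule S.nn_cond_exp_intg) (use Dsets True in auto)
    also have "\<dots> = (\<integral>\<^sup>+ x. 0 \<partial>M)"
      by (rule nn_integral_cong_AE) (use step2 in \<open>auto simp: indicator_def\<close>)
    finally have "AE x in M. indicator D x * nn_cond_exp M (F t) g x = 0"
      using DM by (subst nn_integral_0_iff_AE[symmetric]) auto
    then have AE3: "AE x in M. x \<notin> {\<omega> \<in> space M. 0 < nn_cond_exp M (F t) g \<omega>} \<inter> D"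
      by (rule AE_mp) (rule AE_I2, auto simp: indicator_def split: if_splits)
    have Ts: "{\<omega> \<in> space M. 0 < nn_cond_exp M (F t) g \<omega>} \<inter> D \<in> sets M"
      using DM by measurable
    have eq: "{\<omega> \<in> space M. 0 < nn_cond_exp M (F t) g \<omega>} - B = {\<omega> \<in> space M. 0 < nn_cond_exp M (F t) g \<omega>} \<inter> D"
      unfolding D_def by auto
    from AE3 have "emeasure M ({\<omega> \<in> space M. 0 < nn_cond_exp M (F t) g \<omega>} \<inter> D) = 0"
    proof -
      have "{x \<in> space M. \<not> x \<notin> {\<omega> \<in> space M. 0 < nn_cond_exp M (F t) g \<omega>} \<inter> D}
          = {\<omega> \<in> space M. 0 < nn_cond_exp M (F t) g \<omega>} \<inter> D" by blast
      from AE_iff_measurable[OF Ts this] AE3 show ?thesis by simp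
    qed
    then show ?thesis using eq unfolding g_def B_def c_def by simp
  qed
qed

end
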